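(* For $n\ge 2$, let $\mathcal M^{\mathrm d}(n)$ be the number of MAB pairs $(u,v)$ of binary words with $|u|=|v|=n$ and $\mathrm{lsb}(u,v)+\mathrm{lsb}(v,u)\le n$. Then $$\mathcal M^{\mathrm d}(n)=\sum_{i=1}^{n-1}\sum_{j=1}^{n-i} D(2n-2i,\,j)\,D(2i,\,i).$$
   Context: Let $\Sigma=\{a,b\}$. For a word $w$ and a letter $c$, $|w|_c$ denotes the number of occurrences of $c$ in $w$. Two words $x,y$ are abelian equivalent, written $x\sim_{\mathrm{abl}}y$, if $|x|_c=|y|_c$ for all $c\in\Sigma$. For words $u,v$: a pair $(x,y)$ is an internal abelian-border of $(u,v)$ if $x$ is a nonempty proper suffix of $u$, $y$ is a proper prefix of $v$, and $x\sim_{\mathrm{abl}}y$; it is an external abelian-border of $(u,v)$ if $x$ is a nonempty proper prefix of $u$, $y$ is a proper suffix of $v$, and $x\sim_{\mathrm{abl}}y$. The pair $(u,v)$ is mutually abelian-bordered (MAB) if it has both an internal and an external abelian-border, and mutually abelian-unbordered (MAU) if it has neither. If $(u,v)$ has an internal abelian-border, $\mathrm{sb}(u,v)$ denotes its internal abelian-border $(x,y)$ of minimal length and $\mathrm{lsb}(u,v)=|x|$ is that minimal length. A binary word $w$ of length $m$ has an abelian-border of length $k$ ($1\le k\le m-1$) if its prefix of length $k$ is abelian equivalent to its suffix of length $k$. $D(m,k)$ denotes the number of binary words of length $m$ whose shortest abelian-border has length exactly $k$. *)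

theory Defs
  imports Main "HOL-Library.Sublist"
begin

text \<open>Binary words over the alphabet {a,b} are modelled as bool lists
  (a = False, b = True).\<close>

definition abel_eq :: "bool list \<Rightarrow> bool list \<Rightarrow> bool" where
  "abel_eq x y \<longleftrightarrow> (\<forall>c. count_list x c = count_list y c)"

definition int_border :: "bool list \<Rightarrow> bool list \<Rightarrow> bool list \<Rightarrow> bool list \<Rightarrow> bool" where
  "int_border u v x y \<longleftrightarrow> x \<noteq> [] \<and> strict_suffix x u \<and> strict_prefix y v \<and> abel_eq x y"

definition ext_border :: "bool list \<Rightarrow> bool list \<Rightarrow> bool list \<Rightarrow> bool list \<Rightarrow> bool" where
  "ext_border u v x y \<longleftrightarrow> x \<noteq> [] \<and> strict_prefix x u \<and> strict_suffix y v \<and> abel_eq x y"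

definition MAB :: "bool list \<Rightarrow> bool list \<Rightarrow> bool" where
  "MAB u v \<longleftrightarrow> (\<exists>x y. int_border u v x y) \<and> (\<exists>x y. ext_border u v x y)"

definition lsb :: "bool list \<Rightarrow> bool list \<Rightarrow> nat" where
  "lsb u v = (LEAST k. \<exists>x y. int_border u v x y \<and> length x = k)"

definition abel_border :: "bool list \<Rightarrow> nat \<Rightarrow> bool" where
  "abel_border w k \<longleftrightarrow> 1 \<le> k \<and> k < length w \<and>
     abel_eq (take k w) (drop (length w - k) w)"

definition shortest_abel_border :: "bool list \<Rightarrow> nat \<Rightarrow> bool" where
  "shortest_abel_border w k \<longleftrightarrow> abel_border w k \<and> (\<forall>j<k. \<not> abel_border w j)"

definition D :: "nat \<Rightarrow> nat \<Rightarrow> nat" where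
  "D m k = card {w :: bool list. length w = m \<and> shortest_abel_border w k}"

definition Md :: "nat \<Rightarrow> nat" where
  "Md n = card {(u :: bool list, v :: bool list). length u = n \<and> length v = n \<and>
     MAB u v \<and> lsb u v + lsb v u \<le> n}"

end

theory Submission
  imports Defs
begin

definition ibk :: "nat \<Rightarrow> bool list \<Rightarrow> bool list \<Rightarrow> nat \<Rightarrow> bool" where
  "ibk n u v k \<longleftrightarrow> 0 < k \<and> k < n \<and> abel_eq (drop (n-k) u) (take k v)"

lemma count_tf: "count_list xs True + count_list xs False = length xs"
  by (induction xs) auto

lemma abel_eq_len: "abel_eq x y \<Longrightarrow> length x = length y"
  unfolding abel_eq_def by (metis count_tf)

lemma abel_eq_sym: "abel_eq x y \<longleftrightarrow> abel_eq y x"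
  unfolding abel_eq_def by metis

lemma L1:
  assumes "length u = n" "length v = n"
  shows "(\<exists>x y. int_border u v x y \<and> length x = k) \<longleftrightarrow> ibk n u v k"
proof
  assume "\<exists>x y. int_border u v x y \<and> length x = k"
  then obtain x y where b: "int_border u v x y" "length x = k" by blast
  have sx: "suffix x u" "x \<noteq> u" and py: "prefix y v" "y \<noteq> v" and ae: "abel_eq x y" and ne: "x \<noteq> []"
    using b unfolding int_border_def strict_suffix_def strict_prefix_def by auto
  obtain zs where zs: "u = zs @ x" using sx(1) unfolding suffix_def by blast
  have lx: "k < n" using sx(2) zs b assms by (cases zs) auto
  have x: "x = drop (n-k) u" using zs b assms by simp
  have ly: "length y = k" using abel_eq_len[OF ae] b by simp
  have y: "y = take k v" using py ly by (metis prefix_def append_eq_conv_conj)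
  show "ibk n u v k" unfolding ibk_def using ae x y lx ne b by auto
next
  assume h: "ibk n u v k"
  show "\<exists>x y. int_border u v x y \<and> length x = k"
  proof (intro exI conjI)
    show "int_border u v (drop (n-k) u) (take k v)"
    proof -
      have "0 < k" "k < n" "abel_eq (drop (n-k) u) (take k v)" using h unfolding ibk_def by auto
      then show ?thesis using assms unfolding int_border_def strict_suffix_def strict_prefix_def
        by (auto simp: suffix_drop take_is_prefix dest: arg_cong[of _ _ length])
    qed
    show "length (drop (n-k) u) = k" using h assms unfolding ibk_def by auto
  qed
qed


lemma ext_iff: "ext_border u v x y = int_border v u y x"
  unfolding ext_border_def int_border_def using abel_eq_sym by (auto dest: abel_eq_len)

lemma MAB_iff:
  assumes "length u = n" "length v = n"
  shows "MAB u v \<longleftrightarrow> (\<exists>k. ibk n u v k) \<and> (\<exists>k. ibk n v u k)"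
proof -
  have "(\<exists>x y. ext_border u v x y) \<longleftrightarrow> (\<exists>x y. int_border v u x y)"
    unfolding ext_iff by blast
  then show ?thesis unfolding MAB_def using L1[OF assms] L1[OF assms(2,1)] by blast
qed

lemma lsb_eq:
  assumes "length u = n" "length v = n"
  shows "lsb u v = (LEAST k. ibk n u v k)"
  unfolding lsb_def using L1[OF assms] by presburger

definition gg :: "nat \<Rightarrow> nat \<Rightarrow> bool list \<Rightarrow> bool list \<Rightarrow> bool list \<times> bool list" where
  "gg n i w1 w2 = (take (n-i) w2 @ drop i w1, take i w1 @ drop (n-i) w2)"

lemma G1:
  assumes "length w1 = 2*i" "length w2 = 2*n-2*i" "0 < i" "i < n" "k \<le> i"
  shows "ibk n (fst (gg n i w1 w2)) (snd (gg n i w1 w2)) k \<longleftrightarrow> abel_border w1 k"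
proof -
  have nle: "\<not> 2*n-2*i \<le> n-i" "\<not> n+n-(i+i) \<le> n-i" using assms by arith+
  have d: "drop (n-k) (take (n-i) w2 @ drop i w1) = drop (2*i-k) w1"
    using assms nle by (simp add: drop_append min_def mult_2 add.commute add.left_commute)
  have t: "take k (take i w1 @ drop (n-i) w2) = take k w1"
    using assms by (simp add: take_append min_def)
  show ?thesis unfolding ibk_def abel_border_def gg_def using assms d t abel_eq_sym[of "take k w1"]
    by auto
qed

lemma G2:
  assumes "length w1 = 2*i" "length w2 = 2*n-2*i" "0 < i" "i < n" "k \<le> n-i"
  shows "ibk n (snd (gg n i w1 w2)) (fst (gg n i w1 w2)) k \<longleftrightarrow> abel_border w2 k"
proof -
  have nle: "\<not> 2*n-2*i \<le> n-i" "\<not> n+n-(i+i) \<le> n-i" using assms by arith+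
  have d: "drop (n-k) (take i w1 @ drop (n-i) w2) = drop (2*n-2*i-k) w2"
    using assms nle by (simp add: drop_append min_def mult_2 add.commute add.left_commute)
  have t: "take k (take (n-i) w2 @ drop i w1) = take k w2"
    using assms nle by (simp add: take_append min_def)
  show ?thesis unfolding ibk_def abel_border_def gg_def using assms nle d t abel_eq_sym[of "take k w2"]
    by auto
qed


lemma least_eq: "P (i::nat) \<Longrightarrow> (\<And>k. k < i \<Longrightarrow> \<not> P k) \<Longrightarrow> Least P = i"
  by (metis Least_equality not_le)

definition FF :: "nat \<Rightarrow> (nat \<times> nat) \<times> bool list \<times> bool list \<Rightarrow> bool list \<times> bool list" where
  "FF n x = (case x of ((i,j),(w1,w2)) \<Rightarrow> gg n i w1 w2)"

definition hh :: "nat \<Rightarrow> bool list \<times> bool list \<Rightarrow> (nat \<times> nat) \<times> bool list \<times> bool list" where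
  "hh n p = (case p of (u,v) \<Rightarrow> ((lsb u v, lsb v u),
      (take (lsb u v) v @ drop (n - lsb u v) u, take (n - lsb u v) u @ drop (lsb u v) v)))"

definition TT :: "nat \<Rightarrow> ((nat \<times> nat) \<times> bool list \<times> bool list) set" where
  "TT n = Sigma (Sigma {1..n-1} (\<lambda>i. {1..n-i})) (\<lambda>(i,j).
     {w. length w = 2*i \<and> shortest_abel_border w i} \<times> {w. length w = 2*n-2*i \<and> shortest_abel_border w j})"

definition SS :: "nat \<Rightarrow> (bool list \<times> bool list) set" where
  "SS n = {(u :: bool list, v :: bool list). length u = n \<and> length v = n \<and>
     MAB u v \<and> lsb u v + lsb v u \<le> n}"

lemma gT:
  assumes "x \<in> TT n"
  shows "FF n x \<in> SS n \<and> hh n (FF n x) = x"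
proof -
  obtain i j w1 w2 where x: "x = ((i,j),(w1,w2))" by (metis prod.exhaust)
  have i: "1 \<le> i" "i \<le> n-1" and j: "1 \<le> j" "j \<le> n-i"
    and w1: "length w1 = 2*i" "shortest_abel_border w1 i"
    and w2: "length w2 = 2*n-2*i" "shortest_abel_border w2 j"
    using assms unfolding x TT_def by auto
  have ipos: "0 < i" "i < n" using i j by auto
  define u where "u = fst (gg n i w1 w2)"
  define v where "v = snd (gg n i w1 w2)"
  have lu: "length u = n" and lv: "length v = n" using w1 w2 ipos unfolding u_def v_def gg_def by auto
  have I: "ibk n u v k \<longleftrightarrow> abel_border w1 k" if "k \<le> i" for k
    using G1[OF w1(1) w2(1) ipos that] unfolding u_def v_def .
  have J: "ibk n v u k \<longleftrightarrow> abel_border w2 k" if "k \<le> n-i" for k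
    using G2[OF w1(1) w2(1) ipos that] unfolding u_def v_def .
  have Ii: "ibk n u v i" using I w1(2) unfolding shortest_abel_border_def by auto
  have Jj: "ibk n v u j" using J j w2(2) unfolding shortest_abel_border_def by auto
  have li: "lsb u v = i" unfolding lsb_eq[OF lu lv]
    by (rule least_eq[of "ibk n u v", OF Ii]) (use I w1(2) in \<open>auto simp: shortest_abel_border_def\<close>)
  have lj: "lsb v u = j" unfolding lsb_eq[OF lv lu]
    by (rule least_eq[of "ibk n v u", OF Jj]) (use J j w2(2) in \<open>auto simp: shortest_abel_border_def\<close>)
  have m: "MAB u v" using MAB_iff[OF lu lv] Ii Jj by blast
  have g: "FF n x = (u,v)" unfolding FF_def x u_def v_def by simp
  have "FF n x \<in> SS n" unfolding g SS_def using lu lv m li lj j by auto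
  moreover have "hh n (u,v) = x" unfolding hh_def prod.case li lj
    using w1(1) w2(1) ipos x by (simp add: u_def v_def gg_def)
  then have "hh n (FF n x) = x" using g by simp
  ultimately show ?thesis by blast
qed

lemma hS:
  assumes "p \<in> SS n"
  shows "hh n p \<in> TT n \<and> FF n (hh n p) = p"
proof -
  obtain u v where p: "p = (u,v)" by (metis prod.exhaust)
  have lu: "length u = n" and lv: "length v = n" and m: "MAB u v" and s: "lsb u v + lsb v u \<le> n"
    using assms unfolding p SS_def by auto
  define i where "i = lsb u v"
  define j where "j = lsb v u"
  obtain k1 k2 where k: "ibk n u v k1" "ibk n v u k2" using MAB_iff[OF lu lv] m by blast
  have Ii: "ibk n u v i"
    unfolding i_def lsb_eq[OF lu lv] using k(1) by (rule LeastI)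
  have Imin: "\<And>k. k < i \<Longrightarrow> \<not> ibk n u v k"
    unfolding i_def lsb_eq[OF lu lv] by (rule not_less_Least)
  have Jj: "ibk n v u j"
    unfolding j_def lsb_eq[OF lv lu] using k(2) by (rule LeastI)
  have Jmin: "\<And>k. k < j \<Longrightarrow> \<not> ibk n v u k"
    unfolding j_def lsb_eq[OF lv lu] by (rule not_less_Least)
  have ipos: "0 < i" "i < n" using Ii unfolding ibk_def by auto
  have jpos: "0 < j" "j \<le> n-i" using Jj s unfolding ibk_def i_def j_def by auto
  define w1 where "w1 = take i v @ drop (n-i) u"
  define w2 where "w2 = take (n-i) u @ drop i v"
  have l1: "length w1 = 2*i" and l2: "length w2 = 2*n-2*i" using lu lv ipos unfolding w1_def w2_def by auto
  have g: "gg n i w1 w2 = (u,v)" unfolding gg_def w1_def w2_def using lu lv ipos by simp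
  have I: "ibk n u v k \<longleftrightarrow> abel_border w1 k" if "k \<le> i" for k
    using G1[OF l1 l2 ipos that] unfolding g by simp
  have J: "ibk n v u k \<longleftrightarrow> abel_border w2 k" if "k \<le> n-i" for k
    using G2[OF l1 l2 ipos that] unfolding g by simp
  have s1: "shortest_abel_border w1 i" unfolding shortest_abel_border_def
    using I Ii Imin by auto
  have s2: "shortest_abel_border w2 j" unfolding shortest_abel_border_def
    using J Jj Jmin jpos by auto
  have h: "hh n p = ((i,j),(w1,w2))" unfolding hh_def p i_def j_def w1_def w2_def by simp
  show ?thesis unfolding h FF_def using g s1 s2 l1 l2 ipos jpos
    unfolding TT_def p by auto
qed

lemma bij: "bij_betw (FF n) (TT n) (SS n)"
  by (rule bij_betw_byWitness[where f'="hh n"]) (use gT hS in blast)+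

lemma fin_len: "finite {w :: bool list. length w = m \<and> P w}"
  by (rule finite_subset[OF _ finite_lists_length_eq[of "UNIV :: bool set" m]]) auto

theorem mainTheorem2:
  fixes n :: nat
  assumes "n \<ge> 2"
  shows "Md n = (\<Sum>i = 1..n-1. \<Sum>j = 1..n-i. D (2*n - 2*i) j * D (2*i) i)"
proof -
  have "Md n = card (SS n)" unfolding Md_def SS_def ..
  also have "\<dots> = card (TT n)" using bij_betw_same_card[OF bij] by simp
  also have "\<dots> = (\<Sum>ij \<in> Sigma {1..n-1} (\<lambda>i. {1..n-i}). D (2*fst ij) (fst ij) * D (2*n - 2*fst ij) (snd ij))"
    unfolding TT_def by (subst card_SigmaI) (auto intro!: sum.cong simp: fin_len card_cartesian_product D_def split: prod.splits)
  also have "\<dots> = (\<Sum>i = 1..n-1. \<Sum>j = 1..n-i. D (2*i) i * D (2*n - 2*i) j)"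
    by (subst sum.Sigma) (auto simp: split_beta)
  finally show ?thesis by (simp add: mult.commute)
qed

end
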